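(* Let $m \ge 2$ and $n \ge 2m-2$ be integers. Then for every real $r$ with $|r|<1$, $$\int_{-1}^1 \frac{U_n(s)(1-s^2)^{m-\frac{1}{2}}}{s-r}\,ds = \pi(-1)^{m}\left(\frac{1}{2}\right)^{2m-2}\sum_{j=0}^{2m-2}(-1)^j\binom{2m-2}{j}T_{n+3-2m+2j}(r),$$ where the integral is a Cauchy principal-value integral.
   Context: $T_k(s)=\cos(k\cos^{-1}s)$ is the Tchebyshev polynomial of the first kind and $U_k(s)=\frac{\sin((k+1)\cos^{-1}s)}{\sin(\cos^{-1}s)}$ is the Tchebyshev polynomial of the second kind, $k=0,1,2,\dots$. The integral with singular point $s=r\in(-1,1)$ is understood in the Cauchy principal-value sense. $\binom{a}{j}=\frac{a!}{j!(a-j)!}$. *)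

theory Defs
  imports "HOL-Analysis.Analysis"
begin

definition cheb_T :: "nat \<Rightarrow> real \<Rightarrow> real" where
  "cheb_T k s = cos (real k * arccos s)"

definition cheb_U :: "nat \<Rightarrow> real \<Rightarrow> real" where
  "cheb_U k s = sin ((real k + 1) * arccos s) / sin (arccos s)"

definition pv_has_integral ::
  "(real \<Rightarrow> real) \<Rightarrow> real \<Rightarrow> real \<Rightarrow> real \<Rightarrow> real \<Rightarrow> bool" where
  "pv_has_integral f a b r I \<longleftrightarrow>
     (\<forall>\<^sub>F e in at_right 0. f integrable_on {a..r-e} \<and> f integrable_on {r+e..b}) \<and>
     ((\<lambda>e. integral {a..r-e} f + integral {r+e..b} f) \<longlongrightarrow> I) (at_right 0)"

end

theory Submission
  imports Defs
begin

lemma pv_cong: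
  assumes "pv_has_integral f a b r I" "a \<le> r" "r \<le> b" and "\<And>s. s \<in> {a..b} \<Longrightarrow> s \<noteq> r \<Longrightarrow> f s = g s"
  shows "pv_has_integral g a b r I"
proof -
  have eq: "(f integrable_on {a..r-e}) = (g integrable_on {a..r-e})"
       "(f integrable_on {r+e..b}) = (g integrable_on {r+e..b})"
       "integral {a..r-e} f = integral {a..r-e} g"
       "integral {r+e..b} f = integral {r+e..b} g" if "e > 0" for e
    using that assms(2-) by (auto intro!: integrable_cong integral_cong)
  have ev: "\<forall>\<^sub>F e in at_right 0. (e::real) > 0" by (simp add: eventually_at_right_less)
  show ?thesis using assms(1) unfolding pv_has_integral_def
  proof (elim conjE, intro conjI)
    assume "\<forall>\<^sub>F e in at_right 0. f integrable_on {a..r-e} \<and> f integrable_on {r+e..b}"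
    then show "\<forall>\<^sub>F e in at_right 0. g integrable_on {a..r-e} \<and> g integrable_on {r+e..b}"
      using ev by eventually_elim (simp add: eq)
  next
    assume "((\<lambda>e. integral {a..r-e} f + integral {r+e..b} f) \<longlongrightarrow> I) (at_right 0)"
    then show "((\<lambda>e. integral {a..r-e} g + integral {r+e..b} g) \<longlongrightarrow> I) (at_right 0)"
      by (rule Lim_transform_eventually) (use ev in \<open>eventually_elim, simp add: eq\<close>)
  qed
qed

lemma pv_add:
  assumes "pv_has_integral f a b r I" "pv_has_integral g a b r J"
  shows "pv_has_integral (\<lambda>s. f s + g s) a b r (I + J)"
proof -
  have e1: "\<forall>\<^sub>F e in at_right 0. f integrable_on {a..r-e} \<and> f integrable_on {r+e..b}"
    using assms(1) unfolding pv_has_integral_def by (rule conjunct1)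
  have e2: "\<forall>\<^sub>F e in at_right 0. g integrable_on {a..r-e} \<and> g integrable_on {r+e..b}"
    using assms(2) unfolding pv_has_integral_def by (rule conjunct1)
  have ev: "\<forall>\<^sub>F e in at_right 0. f integrable_on {a..r-e} \<and> f integrable_on {r+e..b}
     \<and> g integrable_on {a..r-e} \<and> g integrable_on {r+e..b}"
    using e1 e2 by eventually_elim blast
  have E: "\<forall>\<^sub>F e in at_right 0. integral {a..r-e} f + integral {r+e..b} f + (integral {a..r-e} g + integral {r+e..b} g)
     = integral {a..r-e} (\<lambda>s. f s + g s) + integral {r+e..b} (\<lambda>s. f s + g s)"
    using ev by eventually_elim (simp add: integral_add)
  have T: "((\<lambda>e. integral {a..r-e} f + integral {r+e..b} f + (integral {a..r-e} g + integral {r+e..b} g)) \<longlongrightarrow> I + J) (at_right 0)"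
    using assms unfolding pv_has_integral_def by (intro tendsto_add) auto
  have "((\<lambda>e. integral {a..r-e} (\<lambda>s. f s + g s) + integral {r+e..b} (\<lambda>s. f s + g s)) \<longlongrightarrow> I + J) (at_right 0)"
    by (rule Lim_transform_eventually[OF T E])
  moreover have "\<forall>\<^sub>F e in at_right 0. (\<lambda>s. f s + g s) integrable_on {a..r-e} \<and> (\<lambda>s. f s + g s) integrable_on {r+e..b}"
    using ev by eventually_elim (auto intro: integrable_add)
  ultimately show ?thesis unfolding pv_has_integral_def by blast
qed

lemma pv_cmult:
  assumes "pv_has_integral f a b r I"
  shows "pv_has_integral (\<lambda>s. c * f s) a b r (c * I)"
proof -
  from assms have ev: "\<forall>\<^sub>F e in at_right 0. f integrable_on {a..r-e} \<and> f integrable_on {r+e..b}"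
    unfolding pv_has_integral_def by blast
  have E: "\<forall>\<^sub>F e in at_right 0. c * (integral {a..r-e} f + integral {r+e..b} f)
     = integral {a..r-e} (\<lambda>s. c * f s) + integral {r+e..b} (\<lambda>s. c * f s)"
    using ev by eventually_elim (simp add: distrib_left)
  have T: "((\<lambda>e. c * (integral {a..r-e} f + integral {r+e..b} f)) \<longlongrightarrow> c * I) (at_right 0)"
    using assms unfolding pv_has_integral_def by (intro tendsto_mult) auto
  from T E have "((\<lambda>e. integral {a..r-e} (\<lambda>s. c * f s) + integral {r+e..b} (\<lambda>s. c * f s)) \<longlongrightarrow> c * I) (at_right 0)"
    by (rule Lim_transform_eventually)
  moreover have "\<forall>\<^sub>F e in at_right 0. (\<lambda>s. c * f s) integrable_on {a..r-e} \<and> (\<lambda>s. c * f s) integrable_on {r+e..b}"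
    using ev by eventually_elim (auto intro: integrable_on_mult_right)
  ultimately show ?thesis unfolding pv_has_integral_def by blast
qed

lemma pv_zero: "pv_has_integral (\<lambda>s. 0) a b r 0"
  unfolding pv_has_integral_def by (simp add: integrable_0)

lemma pv_sum:
  assumes "finite A" "\<And>j. j \<in> A \<Longrightarrow> pv_has_integral (f j) a b r (I j)"
  shows "pv_has_integral (\<lambda>s. \<Sum>j\<in>A. f j s) a b r (\<Sum>j\<in>A. I j)"
  using assms
proof (induction A rule: finite_induct)
  case empty then show ?case by (simp add: pv_zero)
next
  case (insert x F)
  then show ?case by (simp add: pv_add)
qed

lemma pv_ftc:
  fixes G f :: "real \<Rightarrow> real"
  assumes "a < r" "r < b" "continuous_on ({a..b} - {r}) G"
    "\<And>x. x \<in> {a<..<b} \<Longrightarrow> x \<noteq> r \<Longrightarrow> (G has_real_derivative f x) (at x)"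
    "((\<lambda>e. G (r - e) - G (r + e)) \<longlongrightarrow> D) (at_right 0)"
  shows "pv_has_integral f a b r (G b - G a + D)"
proof -
  have ev: "\<forall>\<^sub>F e in at_right 0. 0 < e \<and> e < min (r - a) (b - r)"
    by (intro eventually_conj eventually_at_right_less order_tendstoD(2)[OF tendsto_ident_at]) (use assms(1,2) in auto)
  have hi: "(f has_integral G (r-e) - G a) {a..r-e} \<and> (f has_integral G b - G (r+e)) {r+e..b}"
    if e: "0 < e" "e < min (r - a) (b - r)" for e
  proof
    show "(f has_integral G (r-e) - G a) {a..r-e}"
    proof (rule fundamental_theorem_of_calculus_interior)
      show "a \<le> r - e" using e by auto
      show "continuous_on {a..r-e} G" by (rule continuous_on_subset[OF assms(3)]) (use e in auto)
      show "(G has_vector_derivative f x) (at x)" if "x \<in> {a<..<r-e}" for x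
        using that e assms(4)[of x] by (auto simp: has_real_derivative_iff_has_vector_derivative)
    qed
    show "(f has_integral G b - G (r+e)) {r+e..b}"
    proof (rule fundamental_theorem_of_calculus_interior)
      show "r + e \<le> b" using e by auto
      show "continuous_on {r+e..b} G" by (rule continuous_on_subset[OF assms(3)]) (use e in auto)
      show "(G has_vector_derivative f x) (at x)" if "x \<in> {r+e<..<b}" for x
        using that e assms(4)[of x] by (auto simp: has_real_derivative_iff_has_vector_derivative)
    qed
  qed
  have "\<forall>\<^sub>F e in at_right 0. f integrable_on {a..r-e} \<and> f integrable_on {r+e..b}"
    using ev
  proof eventually_elim
    case (elim e)
    then show ?case using hi[of e] has_integral_integrable by blast
  qed
  moreover have E: "\<forall>\<^sub>F e in at_right 0. G b - G a + (G (r - e) - G (r + e)) = integral {a..r-e} f + integral {r+e..b} f"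
    using ev
  proof eventually_elim
    case (elim e)
    have "integral {a..r-e} f = G (r-e) - G a" "integral {r+e..b} f = G b - G (r+e)"
      using hi[OF conjunct1[OF elim] conjunct2[OF elim]] by (auto intro: integral_unique)
    then show ?case by simp
  qed
  moreover have "((\<lambda>e. integral {a..r-e} f + integral {r+e..b} f) \<longlongrightarrow> G b - G a + D) (at_right 0)"
    by (rule Lim_transform_eventually[OF tendsto_add[OF tendsto_const assms(5)] E])
  ultimately show ?thesis unfolding pv_has_integral_def by blast
qed

lemma cont_diff_lim:
  fixes G :: "real \<Rightarrow> real"
  assumes "isCont G r"
  shows "((\<lambda>e. G (r - e) - G (r + e)) \<longlongrightarrow> 0) (at_right 0)"
proof -
  have l1: "((\<lambda>e. r - e) \<longlongrightarrow> r) (at_right 0)" by (auto intro!: tendsto_eq_intros)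
  have l2: "((\<lambda>e. r + e) \<longlongrightarrow> r) (at_right 0)" by (auto intro!: tendsto_eq_intros)
  have "((\<lambda>e. G (r - e) - G (r + e)) \<longlongrightarrow> G r - G r) (at_right 0)"
    by (intro tendsto_diff isCont_tendsto_compose[OF assms l1] isCont_tendsto_compose[OF assms l2])
  then show ?thesis by simp
qed

lemma deriv_sin_arccos_div:
  assumes "-1 < x" "x < 1"
  shows "((\<lambda>x. sin (c * arccos x) / d) has_real_derivative (cos (c * arccos x) * c / (- sqrt (1 - x\<^sup>2)) / d)) (at x)"
  using assms by (auto intro!: derivative_eq_intros DERIV_arccos simp: divide_inverse)

lemma deriv_sin_arccos:
  assumes "-1 < x" "x < 1"
  shows "((\<lambda>x. sin (c * arccos x)) has_real_derivative (cos (c * arccos x) * c / (- sqrt (1 - x\<^sup>2)))) (at x)"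
  using assms by (auto intro!: derivative_eq_intros DERIV_arccos simp: divide_inverse)

lemma alg:
  fixes x r w q N :: real
  assumes w: "w^2 = 1-x^2" and q: "q^2 = 1-r^2" and N: "N = 1 - r*x + q*w"
  and nz: "w \<noteq> 0" "N \<noteq> 0" "x \<noteq> r"
  shows "- q * ((- r - q * x / w) / N - 1 / (x - r)) + (- x / w) - r * (1 / w) = w / (x - r)"
proof -
  have xr: "x - r \<noteq> 0" using nz by simp
  show ?thesis using nz xr
    using w q N by (simp add: field_simps) algebra
qed

lemma pv_sin_k:
  assumes "k \<ge> 2" "\<bar>r\<bar> < 1"
  shows "pv_has_integral (\<lambda>s. 2 * sin (real k * arccos s)) (-1) 1 r 0"
proof -
  define a where "a = real (k - 1)"
  define b where "b = real (k + 1)"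
  have a0: "a \<noteq> 0" and b0: "b \<noteq> 0" using assms by (auto simp: a_def b_def)
  have ak: "a = real k - 1" using assms by (simp add: a_def)
  have bk: "b = real k + 1" by (simp add: b_def)
  define G where "G s = - (sin (a * arccos s) / a - sin (b * arccos s) / b)" for s
  have cont: "continuous_on {-1..1} G"
    unfolding G_def using a0 b0 by (intro continuous_intros continuous_on_arccos) auto
  have "isCont G r"
  proof -
    have "continuous_on {-1<..<1} G" using cont by (rule continuous_on_subset) auto
    then show ?thesis using assms(2) by (simp add: continuous_on_eq_continuous_at abs_less_iff)
  qed
  have deriv: "(G has_real_derivative 2 * sin (real k * arccos x)) (at x)" if x: "-1 < x" "x < 1" for x
  proof -
    have "(G has_real_derivative - (cos (a * arccos x) * a / (- sqrt (1 - x\<^sup>2)) / a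
                - cos (b * arccos x) * b / (- sqrt (1 - x\<^sup>2)) / b)) (at x)"
      unfolding G_def[abs_def]
      by (intro derivative_intros deriv_sin_arccos_div x)
    moreover have "- (cos (a * arccos x) * a / (- sqrt (1 - x\<^sup>2)) / a
                - cos (b * arccos x) * b / (- sqrt (1 - x\<^sup>2)) / b) = 2 * sin (real k * arccos x)"
    proof -
      have w: "sqrt (1 - x\<^sup>2) = sin (arccos x)" using x by (simp add: sin_arccos)
      have w0: "sin (arccos x) \<noteq> 0" using x by (simp add: sin_arccos_nonzero)
      have ha: "cos (a * arccos x) = cos (real k * arccos x) * cos (arccos x) + sin (real k * arccos x) * sin (arccos x)"
      proof -
        have "a * arccos x = real k * arccos x - arccos x" by (simp add: ak algebra_simps)
        then show ?thesis by (simp add: cos_diff)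
      qed
      have hb: "cos (b * arccos x) = cos (real k * arccos x) * cos (arccos x) - sin (real k * arccos x) * sin (arccos x)"
      proof -
        have "b * arccos x = real k * arccos x + arccos x" by (simp add: bk algebra_simps)
        then show ?thesis by (simp add: cos_add)
      qed
      show ?thesis using a0 b0 w0 unfolding w ha hb
        by (simp add: field_simps)
    qed
    ultimately show ?thesis by simp
  qed
  have "pv_has_integral (\<lambda>s. 2 * sin (real k * arccos s)) (-1) 1 r (G 1 - G (-1) + 0)"
    by (rule pv_ftc) (use assms cont deriv cont_diff_lim[OF \<open>isCont G r\<close>] in \<open>auto intro: continuous_on_subset\<close>)
  moreover have "G 1 = 0" by (simp add: G_def)
  moreover have "G (-1) = 0"
    using sin_npi[of "k - 1"] sin_npi[of "k + 1"] by (simp add: G_def a_def b_def del: of_nat_add of_nat_Suc)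
  ultimately show ?thesis by simp
qed

lemma pv_sin_1:
  assumes "\<bar>r\<bar> < 1"
  shows "pv_has_integral (\<lambda>s. 2 * sin (arccos s)) (-1) 1 r pi"
proof -
  define G where "G s = - (arccos s - sin (2 * arccos s) / 2)" for s
  have cont: "continuous_on {-1..1} G"
    unfolding G_def by (intro continuous_intros continuous_on_arccos) auto
  have "isCont G r"
  proof -
    have "continuous_on {-1<..<1} G" using cont by (rule continuous_on_subset) auto
    then show ?thesis using assms by (simp add: continuous_on_eq_continuous_at abs_less_iff)
  qed
  have deriv: "(G has_real_derivative 2 * sin (arccos x)) (at x)" if x: "-1 < x" "x < 1" for x
  proof -
    have "(G has_real_derivative - (inverse (- sqrt (1 - x\<^sup>2))
                - cos (2 * arccos x) * 2 / (- sqrt (1 - x\<^sup>2)) / 2)) (at x)"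
      unfolding G_def[abs_def]
      by (intro derivative_intros deriv_sin_arccos_div DERIV_arccos x)
    moreover have "- (inverse (- sqrt (1 - x\<^sup>2))
                - cos (2 * arccos x) * 2 / (- sqrt (1 - x\<^sup>2)) / 2) = 2 * sin (arccos x)"
    proof -
      have w: "sqrt (1 - x\<^sup>2) = sin (arccos x)" using x by (simp add: sin_arccos)
      have w0: "sin (arccos x) \<noteq> 0" using x by (simp add: sin_arccos_nonzero)
      have c2: "cos (2 * arccos x) = 1 - 2 * sin (arccos x)^2" by (rule cos_double_sin)
      show ?thesis using w0 unfolding w c2
        by (simp add: field_simps power2_eq_square)
    qed
    ultimately show ?thesis by simp
  qed
  have "pv_has_integral (\<lambda>s. 2 * sin (arccos s)) (-1) 1 r (G 1 - G (-1) + 0)"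
    by (rule pv_ftc) (use assms cont deriv cont_diff_lim[OF \<open>isCont G r\<close>] in \<open>auto intro: continuous_on_subset\<close>)
  moreover have "G 1 = 0" by (simp add: G_def)
  moreover have "G (-1) = - pi"
    by (simp add: G_def)
  ultimately show ?thesis by simp
qed

lemma pv_sqrt:
  assumes r1: "\<bar>r\<bar> < 1"
  shows "pv_has_integral (\<lambda>s. sin (arccos s) / (s - r)) (-1) 1 r (- pi * r)"
proof -
  define q where "q = sqrt (1 - r\<^sup>2)"
  have r2: "r\<^sup>2 < 1" using r1 by (simp add: abs_square_less_1)
  have q0: "q > 0" using r2 by (simp add: q_def)
  have qq: "q^2 = 1 - r^2" using r2 by (simp add: q_def)
  define N where "N s = 1 - r * s + q * sqrt (1 - s\<^sup>2)" for s
  have Npos: "N s > 0" if "-1 \<le> s" "s \<le> 1" for s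
  proof -
    have "\<bar>r * s\<bar> < 1"
    proof -
      have "\<bar>r * s\<bar> = \<bar>r\<bar> * \<bar>s\<bar>" by (simp add: abs_mult)
      also have "\<dots> \<le> \<bar>r\<bar>" using that by (intro mult_left_le) auto
      finally show ?thesis using r1 by simp
    qed
    moreover have "q * sqrt (1 - s\<^sup>2) \<ge> 0" using q0 that by (intro mult_nonneg_nonneg) (auto simp: abs_square_le_1)
    ultimately show ?thesis unfolding N_def by linarith
  qed
  have Nne: "-1 \<le> s \<Longrightarrow> s \<le> 1 \<Longrightarrow> N s \<noteq> 0" for s using Npos[of s] by simp
  define F where "F s = - q * (ln (N s) - ln ((s - r)\<^sup>2) / 2) + sqrt (1 - s\<^sup>2) - r * arcsin s" for s
  define K where "K s = - q * ln (N s) + sqrt (1 - s\<^sup>2) - r * arcsin s" for s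
  have FK: "F (r - e) - F (r + e) = K (r - e) - K (r + e)" for e
    by (simp add: F_def K_def power2_eq_square algebra_simps)
  have contN: "continuous_on S N" for S
    unfolding N_def[abs_def] by (intro continuous_intros)
  have cont: "continuous_on ({-1..1} - {r}) F"
    unfolding F_def[abs_def]
    by (intro continuous_intros contN) (auto simp: Nne)
  have contK: "continuous_on {-1..1} K"
    unfolding K_def[abs_def]
    by (intro continuous_intros contN) (auto simp: Nne)
  have "isCont K r"
  proof -
    have "continuous_on {-1<..<1} K" using contK by (rule continuous_on_subset) auto
    then show ?thesis using r1 by (simp add: continuous_on_eq_continuous_at abs_less_iff)
  qed
  have deriv: "(F has_real_derivative sin (arccos x) / (x - r)) (at x)"
    if x: "-1 < x" "x < 1" "x \<noteq> r" for x
  proof -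
    define w where "w = sqrt (1 - x\<^sup>2)"
    have x2: "x\<^sup>2 < 1" using x by (simp add: abs_square_less_1)
    have w0: "w > 0" using x2 by (simp add: w_def)
    have ww: "w^2 = 1 - x^2" using x2 by (simp add: w_def)
    have dw: "((\<lambda>s. sqrt (1 - s\<^sup>2)) has_real_derivative (- x / w)) (at x)"
      using x2 w0 by (auto intro!: derivative_eq_intros simp: w_def[symmetric] field_simps)
    have dN: "(N has_real_derivative (- r - q * x / w)) (at x)"
      unfolding N_def[abs_def]
      by (rule DERIV_cong[OF DERIV_add[OF DERIV_diff[OF DERIV_const DERIV_cmult[OF DERIV_ident]] DERIV_cmult[OF dw]]]) simp
    have Nx: "N x > 0" using x by (intro Npos) auto
    have dlnN: "((\<lambda>s. ln (N s)) has_real_derivative (- r - q * x / w) / N x) (at x)"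
      by (rule DERIV_cong[OF DERIV_chain2[OF DERIV_ln_divide[OF Nx] dN]]) simp
    have xr: "(x - r)\<^sup>2 > 0" using x by simp
    have dl2: "((\<lambda>s. ln ((s - r)\<^sup>2) / 2) has_real_derivative 1 / (x - r)) (at x)"
      using x xr by (auto intro!: derivative_eq_intros simp: field_simps power2_eq_square)
    have das: "(arcsin has_real_derivative 1 / w) (at x)"
      using DERIV_arcsin[OF x(1,2)] by (simp add: w_def divide_inverse)
    have "(F has_real_derivative - q * ((- r - q * x / w) / N x - 1 / (x - r)) + (- x / w) - r * (1 / w)) (at x)"
      unfolding F_def[abs_def]
      by (intro DERIV_diff DERIV_add DERIV_cmult dlnN dl2 dw das)
    moreover have "- q * ((- r - q * x / w) / N x - 1 / (x - r)) + (- x / w) - r * (1 / w) = w / (x - r)"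
      by (rule alg[OF ww qq]) (use w0 Nx x in \<open>auto simp: N_def w_def\<close>)
    moreover have "sin (arccos x) = w" using x by (simp add: sin_arccos w_def)
    ultimately show ?thesis by simp
  qed
  have lim: "((\<lambda>e. F (r - e) - F (r + e)) \<longlongrightarrow> 0) (at_right 0)"
    unfolding FK by (rule cont_diff_lim[OF \<open>isCont K r\<close>])
  have "pv_has_integral (\<lambda>s. sin (arccos s) / (s - r)) (-1) 1 r (F 1 - F (-1) + 0)"
    by (rule pv_ftc[OF _ _ cont _ lim]) (use r1 deriv in auto)
  moreover have "F 1 - F (-1) = - pi * r"
  proof -
    have a1: "ln ((1 - r)\<^sup>2) = 2 * ln (1 - r)" using r1 by (subst ln_realpow) auto
    have "(- 1 - r)\<^sup>2 = (1 + r)\<^sup>2" by (simp add: power2_eq_square algebra_simps)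
    then have a2: "ln ((- 1 - r)\<^sup>2) = 2 * ln (1 + r)" using r1 by (simp only:) (subst ln_realpow, auto)
    show ?thesis by (simp add: F_def N_def algebra_simps a1 a2)
  qed
  ultimately show ?thesis by simp
qed

lemma sin_cis_eq0: "complex_of_real (sin t) * cis t * (2 * \<i>) = cis t ^ 2 - 1"
  using sin_cos_squared_add[of t]
  by (simp add: complex_eq_iff power2_eq_square algebra_simps)

lemma sin_cis_eq: "complex_of_real (sin t) * cis t = (cis t ^ 2 - 1) / (2 * \<i>)"
  using sin_cis_eq0[of t] by (simp add: field_simps)

lemma trig_expand:
  fixes t :: real and M p :: nat
  shows "sin (real (M + 2*p) * t) * sin t ^ (2*p) =
    (-1)^p * (1/4)^p * (\<Sum>j=0..2*p. (-1)^j * real (2*p choose j) * sin (real (M + 2*j) * t))"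
proof -
  define z where "z = cis t"
  have c1: "cis (real (M + 2*p) * t) * complex_of_real (sin t ^ (2*p))
      = cis (real M * t) * (complex_of_real (sin t) * z) ^ (2*p)"
  proof -
    have z1: "z^(2*p) = cis (real (2*p) * t)" by (simp only: z_def Complex.DeMoivre)
    have z2: "real M * t + real (2*p) * t = real (M + 2*p) * t" by (simp add: algebra_simps)
    have "cis (real (M + 2*p) * t) = cis (real M * t) * z ^ (2*p)"
      unfolding z1 cis_mult z2 ..
    then show ?thesis by (simp add: power_mult_distrib)
  qed
  also have "\<dots> = cis (real M * t) * (z ^ 2 - 1) ^ (2*p) / (2 * \<i>) ^ (2*p)"
    by (simp only: z_def sin_cis_eq power_divide times_divide_eq_right)
  also have "(2 * \<i>) ^ (2*p) = (-4 :: complex) ^ p"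
    by (simp add: power_mult power_mult_distrib)
  also have "(z ^ 2 - 1) ^ (2*p) = (\<Sum>j\<le>2*p. of_nat (2*p choose j) * (z^2)^j * (-1)^(2*p-j))"
    using binomial_ring[of "z^2" "-1" "2*p"] by simp
  also have "cis (real M * t) * (\<Sum>j\<le>2*p. of_nat (2*p choose j) * (z^2)^j * (-1)^(2*p-j)) / (-4) ^ p
      = (\<Sum>j\<le>2*p. complex_of_real ((-1)^p * (1/4)^p * ((-1)^j * real (2*p choose j))) * cis (real (M + 2*j) * t))"
  proof -
    have "cis (real M * t) * (\<Sum>j\<le>2*p. of_nat (2*p choose j) * (z^2)^j * (-1)^(2*p-j)) / (-4) ^ p
      = (\<Sum>j\<le>2*p. cis (real M * t) * (of_nat (2*p choose j) * (z^2)^j * (-1)^(2*p-j)) / (-4) ^ p)"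
      by (simp add: sum_distrib_left sum_divide_distrib)
    also have "\<dots> = (\<Sum>j\<le>2*p. complex_of_real ((-1)^p * (1/4)^p * ((-1)^j * real (2*p choose j))) * cis (real (M + 2*j) * t))"
    proof (rule sum.cong[OF refl])
      fix j assume j: "j \<in> {..2*p}"
      have m1: "(-1 :: complex) ^ (2*p-j) = (-1)^j"
      proof -
        have "(-1 :: complex) ^ (2*p-j) = (-1)^(2*p) / (-1)^j" using j by (simp add: power_diff)
        also have "\<dots> = (-1)^j" by (cases "even j") (simp_all add: power_mult)
        finally show ?thesis .
      qed
      have cz: "cis (real M * t) * (z^2)^j = cis (real (M + 2*j) * t)"
        by (simp add: z_def power_mult[symmetric] Complex.DeMoivre cis_mult algebra_simps)
      have m4: "(-4 :: complex) ^ p = complex_of_real ((-1)^p * 4^p)"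
        by (simp add: power_mult_distrib[symmetric])
      show "cis (real M * t) * (of_nat (2*p choose j) * (z^2)^j * (-1)^(2*p-j)) / (-4) ^ p
          = complex_of_real ((-1)^p * (1/4)^p * ((-1)^j * real (2*p choose j))) * cis (real (M + 2*j) * t)"
        unfolding m1 m4 cz[symmetric]
        by (simp add: field_simps power_one_over)
    qed
    finally show ?thesis .
  qed
  finally have "cis (real (M + 2*p) * t) * complex_of_real (sin t ^ (2*p)) =
      (\<Sum>j\<le>2*p. complex_of_real ((-1)^p * (1/4)^p * ((-1)^j * real (2*p choose j))) * cis (real (M + 2*j) * t))" .
  then have "Im (cis (real (M + 2*p) * t) * complex_of_real (sin t ^ (2*p))) =
      Im (\<Sum>j\<le>2*p. complex_of_real ((-1)^p * (1/4)^p * ((-1)^j * real (2*p choose j))) * cis (real (M + 2*j) * t))"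
    by simp
  then have "sin (real (M + 2*p) * t) * sin t ^ (2*p) =
      (\<Sum>j\<le>2*p. (-1)^p * (1/4)^p * ((-1)^j * real (2*p choose j)) * sin (real (M + 2*j) * t))"
    by simp
  then show ?thesis
    by (simp add: sum_distrib_left atMost_atLeast0 mult.assoc)
qed

lemma sin_rec: "sin (real (k + 2) * t) = 2 * cos t * sin (real (k + 1) * t) - sin (real k * t)"
proof -
  have "real (k + 2) * t = real (k + 1) * t + t" by (simp add: algebra_simps)
  moreover have "real k * t = real (k + 1) * t - t" by (simp add: algebra_simps)
  ultimately show ?thesis by (simp add: sin_add sin_diff)
qed

lemma cos_rec: "cos (real (k + 2) * t) = 2 * cos t * cos (real (k + 1) * t) - cos (real k * t)"
proof -
  have "real (k + 2) * t = real (k + 1) * t + t" by (simp add: algebra_simps)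
  moreover have "real k * t = real (k + 1) * t - t" by (simp add: algebra_simps)
  ultimately show ?thesis by (simp add: cos_add cos_diff)
qed

lemma pv_H_aux:
  assumes r1: "\<bar>r\<bar> < 1"
  defines "V \<equiv> (\<lambda>k. if k = 0 then 0 else - pi * cheb_T k r)"
  shows "pv_has_integral (\<lambda>s. sin (real k * arccos s) / (s - r)) (-1) 1 r (V k) \<and>
         pv_has_integral (\<lambda>s. sin (real (k+1) * arccos s) / (s - r)) (-1) 1 r (V (k+1))"
proof (induction k)
  case 0
  have cr: "cos (arccos r) = r" using r1 by (simp add: cos_arccos_abs)
  show ?case using pv_zero[of "-1" 1 r] pv_sqrt[OF r1]
    by (simp add: V_def cheb_T_def cr)
next
  case (Suc k)
  have cr: "cos (arccos r) = r" using r1 by (simp add: cos_arccos_abs)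
  define I where "I = (if k = 0 then pi else 0)"
  have A: "pv_has_integral (\<lambda>s. 2 * sin (real (k+1) * arccos s)) (-1) 1 r I"
  proof (cases "k = 0")
    case True then show ?thesis using pv_sin_1[OF r1] by (simp add: I_def)
  next
    case False then show ?thesis using pv_sin_k[OF _ r1, of "k+1"] by (simp add: I_def)
  qed
  have B: "pv_has_integral (\<lambda>s. 2 * r * (sin (real (k+1) * arccos s) / (s - r))) (-1) 1 r (2 * r * V (k+1))"
    using Suc.IH by (intro pv_cmult) auto
  have C: "pv_has_integral (\<lambda>s. (-1) * (sin (real k * arccos s) / (s - r))) (-1) 1 r ((-1) * V k)"
    using Suc.IH by (intro pv_cmult) auto
  have D: "pv_has_integral (\<lambda>s. sin (real (k+2) * arccos s) / (s - r)) (-1) 1 r (I + 2 * r * V (k+1) + (-1) * V k)"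
  proof (rule pv_cong[OF pv_add[OF pv_add[OF A B] C]])
    show "-1 \<le> r" "r \<le> 1" using r1 by auto
    fix s :: real assume s: "s \<in> {-1..1}" "s \<noteq> r"
    have cs: "cos (arccos s) = s" using s by simp
    have sr: "s - r \<noteq> 0" using s by simp
    show "2 * sin (real (k + 1) * arccos s) + 2 * r * (sin (real (k + 1) * arccos s) / (s - r)) +
          -1 * (sin (real k * arccos s) / (s - r)) = sin (real (k + 2) * arccos s) / (s - r)"
    proof -
      have e: "sin (real (k + 2) * arccos s) = 2 * s * sin (real (k + 1) * arccos s) - sin (real k * arccos s)"
        using sin_rec[of k "arccos s"] cs by simp
      have u: "inverse (s - r) * (s - r) = 1" using sr by simp
      have g0: "\<And>b c u. u * (s - r) = 1 \<Longrightarrow> 2 * b + 2 * r * (b * u) + -1 * (c * u) = (2 * s * b - c) * u"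
        by algebra
      have g: "\<And>b c. 2 * b + 2 * r * (b / (s - r)) + -1 * (c / (s - r)) = (2 * s * b - c) / (s - r)"
        unfolding divide_inverse using g0[OF u] .
      show ?thesis unfolding e g ..
    qed
  qed
  have "I + 2 * r * V (k+1) + (-1) * V k = V (k + 2)"
  proof (cases "k = 0")
    case True
    have c2: "cos (2 * arccos r) = 2 * r^2 - 1" by (simp add: cos_double_cos cr)
    have v0: "V 0 = 0" by (simp add: V_def)
    have v1: "V (Suc 0) = - pi * r" by (simp add: V_def cheb_T_def cr)
    have v2: "V (Suc (Suc 0)) = - pi * (2 * r^2 - 1)" using c2 by (simp add: V_def cheb_T_def)
    show ?thesis using True by (simp add: I_def v0 v1 v2 algebra_simps power2_eq_square)
  next
    case False
    have T2: "cheb_T (k+2) r = 2 * r * cheb_T (k+1) r - cheb_T k r"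
      unfolding cheb_T_def using cos_rec[of k "arccos r"] cr by simp
    have e: "V (k+2) = - pi * cheb_T (k+2) r" "V (k+1) = - pi * cheb_T (k+1) r"
        "V k = - pi * cheb_T k r" "I = 0" using False by (simp_all add: V_def I_def)
    show ?thesis unfolding e T2 by (simp add: algebra_simps)
  qed
  then show ?case using D Suc.IH by simp
qed

lemma pv_H:
  assumes "\<bar>r\<bar> < 1" "k \<ge> 1"
  shows "pv_has_integral (\<lambda>s. sin (real k * arccos s) / (s - r)) (-1) 1 r (- pi * cheb_T k r)"
  using conjunct1[OF pv_H_aux[OF assms(1), of k]] assms(2) by simp

theorem mainTheorem2:
  fixes m n :: nat and r :: real
  assumes "m \<ge> 2" and "n \<ge> 2 * m - 2" and "\<bar>r\<bar> < 1"
  shows "pv_has_integral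
           (\<lambda>s. cheb_U n s * (1 - s\<^sup>2) powr (real m - 1/2) / (s - r)) (-1) 1 r
           (pi * (-1) ^ m * (1/2) ^ (2 * m - 2) *
              (\<Sum>j = 0..2 * m - 2. (-1) ^ j * real ((2 * m - 2) choose j)
                 * cheb_T (n + 3 + 2 * j - 2 * m) r))"
proof -
  define p where "p = m - 1"
  define M where "M = n + 3 - 2 * m"
  have p1: "p \<ge> 1" using assms(1) by (simp add: p_def)
  have mp: "m = p + 1" using assms(1) by (simp add: p_def)
  have M1: "M \<ge> 1" using assms(1,2) by (simp add: M_def)
  have idx: "n + 3 + 2 * j - 2 * m = M + 2 * j" for j using assms(1,2) by (simp add: M_def)
  have nM: "n + 1 = M + 2 * p" using assms(1,2) by (simp add: M_def p_def)
  have twom: "2 * m - 2 = 2 * p" using mp by simp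
  define c where "c j = (-1)^p * (1/4)^p * ((-1)^j * real (2*p choose j))" for j :: nat
  have pvs: "pv_has_integral (\<lambda>s. \<Sum>j\<in>{0..2*p}. c j * (sin (real (M + 2*j) * arccos s) / (s - r))) (-1) 1 r
      (\<Sum>j\<in>{0..2*p}. c j * (- pi * cheb_T (M + 2*j) r))"
  proof (rule pv_sum)
    fix j :: nat
    have "pv_has_integral (\<lambda>s. sin (real (M + 2*j) * arccos s) / (s - r)) (-1) 1 r (- pi * cheb_T (M + 2*j) r)"
      using M1 by (intro pv_H assms(3)) simp
    then show "pv_has_integral (\<lambda>s. c j * (sin (real (M + 2*j) * arccos s) / (s - r))) (-1) 1 r
      (c j * (- pi * cheb_T (M + 2*j) r))" by (rule pv_cmult)
  qed simp
  have pt: "cheb_U n s * (1 - s\<^sup>2) powr (real m - 1/2) / (s - r)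
      = (\<Sum>j\<in>{0..2*p}. c j * (sin (real (M + 2*j) * arccos s) / (s - r)))"
    if s: "s \<in> {-1..1}" "s \<noteq> r" for s
  proof -
    define w where "w = sin (arccos s)"
    have w: "w = sqrt (1 - s\<^sup>2)" using s by (simp add: w_def sin_arccos)
    have s2: "s\<^sup>2 \<le> 1" using s by (simp add: abs_square_le_1 abs_le_iff)
    have w0: "w \<ge> 0" using s2 by (simp add: w)
    have ww: "1 - s\<^sup>2 = w ^ 2" using s2 by (simp add: w)
    have pw: "(1 - s\<^sup>2) powr (real m - 1/2) = w ^ (2*p+1)"
    proof (cases "w = 0")
      case True then show ?thesis by (simp add: ww)
    next
      case False
      then have wp: "w > 0" using w0 by simp
      have "(1 - s\<^sup>2) powr (real m - 1/2) = (w powr 2) powr (real m - 1/2)"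
        using wp by (simp add: ww powr_numeral)
      also have "\<dots> = w powr (real (2*p+1))" by (simp add: powr_powr mp algebra_simps)
      also have "\<dots> = w ^ (2*p+1)" by (rule powr_realpow[OF wp])
      finally show ?thesis .
    qed
    have U: "cheb_U n s * w ^ (2*p+1) = sin (real (M + 2*p) * arccos s) * w ^ (2*p)"
    proof (cases "w = 0")
      case True then show ?thesis using p1 by simp
    next
      case False
      have "real n + 1 = real (M + 2*p)" using nM by (metis of_nat_Suc Suc_eq_plus1 add.commute)
      then show ?thesis using False unfolding cheb_U_def w_def[symmetric] by (simp add: field_simps)
    qed
    have "cheb_U n s * (1 - s\<^sup>2) powr (real m - 1/2) / (s - r)
        = sin (real (M + 2*p) * arccos s) * sin (arccos s) ^ (2*p) / (s - r)"
      unfolding pw using U unfolding w_def by simp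
    also have "\<dots> = (\<Sum>j\<in>{0..2*p}. c j * sin (real (M + 2*j) * arccos s)) / (s - r)"
      unfolding trig_expand c_def by (simp add: sum_distrib_left mult.assoc)
    also have "\<dots> = (\<Sum>j\<in>{0..2*p}. c j * (sin (real (M + 2*j) * arccos s) / (s - r)))"
      by (simp add: sum_divide_distrib)
    finally show ?thesis .
  qed
  have val: "(\<Sum>j\<in>{0..2*p}. c j * (- pi * cheb_T (M + 2*j) r)) =
      pi * (-1) ^ m * (1/2) ^ (2 * m - 2) *
              (\<Sum>j = 0..2 * m - 2. (-1) ^ j * real ((2 * m - 2) choose j)
                 * cheb_T (n + 3 + 2 * j - 2 * m) r)"
  proof -
    have "(1/2::real) ^ (2 * m - 2) = (1/4)^p" by (simp add: twom power_mult power2_eq_square)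
    moreover have "(-1::real) ^ m = - ((-1)^p)" by (simp add: mp)
    ultimately show ?thesis
      unfolding twom idx c_def by (simp add: sum_distrib_left mult_ac)
  qed
  show ?thesis
    unfolding val[symmetric]
    by (rule pv_cong[OF pvs]) (use assms(3) pt in auto)
qed

end
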